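(* Let $p \geq 3$ and let $\mathbf{A}$ be a spectrally unitary $\mathbb{Z}^p$-action on $\mathbb{Z}^3$ with $\mathrm{Fix}(\mathbf{A}) = \{0\}$. Then $\mathrm{Fix}(\mathbf{A}_i) = \{0\}$ for some $i$ with $1 \leq i \leq p$.
   Context: A $\mathbb{Z}^p$-action $\mathbf{A}$ on $\mathbb{Z}^q$ is spectrally unitary if it is a homomorphism from $\mathbb{Z}^p$ to the automorphism group of $\mathbb{Z}^q$ and $1$ is an eigenvalue of $\mathbf{A}(\ell)$ for every $\ell \in \mathbb{Z}^p$. For an action $\mathbf{B}$ of a group $G$ on $\mathbb{Z}^q$, $\mathrm{Fix}(\mathbf{B}) = \{k \in \mathbb{Z}^q : \mathbf{B}(g)k = k \text{ for all } g \in G\}$. For $i = 1,\dots,p$, $G_i = \{(a_1,\dots,a_p) \in \mathbb{Z}^p : a_i = 0\}$ and $\mathbf{A}_i$ denotes the restriction of $\mathbf{A}$ to the subgroup $G_i$; thus $\mathrm{Fix}(\mathbf{A}_i) = \bigcap_{j \neq i} \mathrm{Fix}(\mathbf{A}(e_j))$ where $e_1,\dots,e_p$ is the canonical basis of $\mathbb{Z}^p$. *)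

theory Defs
  imports "HOL-Analysis.Analysis"
begin

text \<open>The group Z^p, realised as integer sequences supported on indices 0..p-1
  (index i here corresponds to coordinate i+1 of the paper).\<close>
definition Zp :: "nat \<Rightarrow> (nat \<Rightarrow> int) set" where
  "Zp p = {l. \<forall>i\<ge>p. l i = 0}"

definition eigenvalue_one :: "int^3^3 \<Rightarrow> bool" where
  "eigenvalue_one M \<longleftrightarrow>
     (\<exists>v::complex^3. v \<noteq> 0 \<and> (\<chi> i j. of_int (M$i$j)) *v v = v)"

text \<open>A Z^p-action on Z^3: a homomorphism from Z^p into the automorphism group of Z^3,
  i.e. into the invertible integer 3x3 matrices (acting on column vectors).\<close>
definition action :: "nat \<Rightarrow> ((nat \<Rightarrow> int) \<Rightarrow> int^3^3) \<Rightarrow> bool" where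
  "action p A \<longleftrightarrow>
     (\<forall>l\<in>Zp p. invertible (A l)) \<and>
     (\<forall>l\<in>Zp p. \<forall>m\<in>Zp p. A (\<lambda>i. l i + m i) = A l ** A m)"

definition spectrally_unitary :: "nat \<Rightarrow> ((nat \<Rightarrow> int) \<Rightarrow> int^3^3) \<Rightarrow> bool" where
  "spectrally_unitary p A \<longleftrightarrow> action p A \<and> (\<forall>l\<in>Zp p. eigenvalue_one (A l))"

definition Fix :: "(nat \<Rightarrow> int) set \<Rightarrow> ((nat \<Rightarrow> int) \<Rightarrow> int^3^3) \<Rightarrow> (int^3) set" where
  "Fix H A = {k. \<forall>l\<in>H. A l *v k = k}"

definition G_sub :: "nat \<Rightarrow> nat \<Rightarrow> (nat \<Rightarrow> int) set" where
  "G_sub p i = {l \<in> Zp p. l i = 0}"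

end

theory Submission
  imports Defs
begin

lemma mv_sum: "(M::'a::comm_semiring_1^'n^'m) *v sum f S = (\<Sum>c\<in>S. M *v f c)"
  by (simp add: vec_eq_iff matrix_vector_mult_def sum_distrib_left sum_component sum.swap[of _ S])

lemma mv_smult: "(M::'a::comm_ring_1^'n^'m) *v (a *s v) = a *s (M *v v)"
  by (simp add: vec_eq_iff matrix_vector_mult_def sum_distrib_left algebra_simps)

lemma smult_eq0: "(a::'a::field) *s (v::'a^'n) = 0 \<Longrightarrow> v \<noteq> 0 \<Longrightarrow> a = 0"
  by (metis vector_sneg_minus1 vector_smult_assoc vector_smult_lid vector_smult_rzero
      mult.commute nonzero_divide_eq_eq divide_self_if) 


lemma key:
  fixes M :: "3 \<Rightarrow> complex^3^3" and w :: "3 \<Rightarrow> complex^3"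
  assumes comm: "\<And>i j. M i ** M j = M j ** M i"
    and fx: "\<And>i j. i \<noteq> j \<Longrightarrow> M j *v w i = w i"
    and nfx: "\<And>i. M i *v w i \<noteq> w i"
    and v: "(M 1 ** M 2 ** M 3) *v v = v"
  shows "v = 0"
proof -
  define W :: "complex^3^3" where "W = (\<chi> r c. w c $ r)"
  have Wx: "W *v x = (\<Sum>c\<in>UNIV. x$c *s w c)" for x
    unfolding matrix_mult_sum W_def by (simp add: column_def)
  have diff: "M i *v (W *v x) - W *v x = x$i *s (M i *v w i - w i)" for i x
  proof -
    have "M i *v (W *v x) - W *v x = (\<Sum>c\<in>UNIV. x$c *s (M i *v w c - w c))"
      by (simp add: Wx mv_sum mv_smult sum_subtractf vector_ssub_ldistrib)
    also have "\<dots> = (\<Sum>c\<in>UNIV. if c = i then x$i *s (M i *v w i - w i) else 0)"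
      by (rule sum.cong) (auto simp: fx)
    finally show ?thesis by simp
  qed
  have indep: "x = 0" if "W *v x = 0" for x
  proof -
    have "x$i = 0" for i
      using diff[of i x] that nfx[of i] smult_eq0 by force
    then show ?thesis by (simp add: vec_eq_iff)
  qed
  then obtain B where "B ** W = mat 1"
    using matrix_left_invertible_ker by blast
  then have WB: "W ** B = mat 1" using matrix_left_right_inverse by blast
  have span: "W *v (B *v u) = u" for u
    by (simp add: WB matrix_vector_mul_assoc)
  have scal: "\<exists>a. a \<noteq> 1 \<and> M i *v w i = a *s w i" for i
  proof -
    define y where "y = B *v (M i *v w i)"
    have Wy: "W *v y = M i *v w i" by (simp add: y_def span)
    have "y$j = 0" if "j \<noteq> i" for j
    proof -
      have "M j *v (M i *v w i) = M i *v w i"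
        by (metis comm fx matrix_vector_mul_assoc that)
      then have "y$j *s (M j *v w j - w j) = 0" using diff[of j y] Wy by simp
      then show ?thesis using nfx[of j] smult_eq0 by force
    qed
    then have "W *v y = y$i *s w i"
      unfolding Wx by (subst sum.remove[of _ i]) auto
    then have e: "M i *v w i = y$i *s w i" using Wy by simp
    moreover have "y$i \<noteq> 1" using e nfx[of i] by auto
    ultimately show ?thesis by blast
  qed
  then obtain a where a: "\<And>i. a i \<noteq> 1" "\<And>i. M i *v w i = a i *s w i" by metis
  have prod: "(M 1 ** M 2 ** M 3) *v w c = a c *s w c" for c
  proof -
    have "(M 1 ** M 2 ** M 3) *v w c = M 1 *v (M 2 *v (M 3 *v w c))"
      by (simp add: matrix_vector_mul_assoc matrix_mul_assoc)
    then show ?thesis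
      using exhaust_3[of c] fx a(2) by (auto simp: mv_smult)
  qed
  define x where "x = B *v v"
  have vx: "v = W *v x" by (simp add: x_def span)
  define z where "z = (\<chi> c. x$c * (a c - 1))"
  have "W *v z = (M 1 ** M 2 ** M 3) *v v - v"
    unfolding vx Wx z_def
    by (simp add: mv_sum mv_smult prod vec_eq_iff sum_subtractf[symmetric] algebra_simps)
  then have "z = 0" using v indep by simp
  then have "x = 0" using a(1) by (auto simp: vec_eq_iff z_def)
  then show ?thesis using vx by simp
qed

definition Cm :: "int^3^3 \<Rightarrow> complex^3^3" where
  "Cm X = (\<chi> a b. of_int (X$a$b))"
definition cv :: "int^3 \<Rightarrow> complex^3" where
  "cv u = (\<chi> a. of_int (u$a))"

lemma Cm_mult: "Cm (X ** Y) = Cm X ** Cm Y"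
  by (simp add: Cm_def vec_eq_iff matrix_matrix_mult_def)

lemma Cm_mv: "Cm X *v cv u = cv (X *v u)"
  by (simp add: Cm_def cv_def vec_eq_iff matrix_vector_mult_def)

lemma cv_inj: "cv u = cv u' \<longleftrightarrow> u = u'"
  by (simp add: cv_def vec_eq_iff)

lemma cv_0: "cv u = 0 \<longleftrightarrow> u = 0"
  by (simp add: cv_def vec_eq_iff)

definition Ev :: "int \<Rightarrow> nat \<Rightarrow> nat \<Rightarrow> int" where
  "Ev n i = (\<lambda>k. if k = i then n else 0)"

lemma Ev_Zp: "i < p \<Longrightarrow> Ev n i \<in> Zp p"
  by (auto simp: Ev_def Zp_def)

lemma fixall:
  fixes A :: "(nat \<Rightarrow> int) \<Rightarrow> int^3^3"
  assumes act: "action p A" and ip: "i < p"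
    and wG: "w \<in> Fix (G_sub p i) A" and wi: "A (Ev 1 i) *v w = w"
  shows "w \<in> Fix (Zp p) A"
proof -
  have hom: "\<And>l m. l \<in> Zp p \<Longrightarrow> m \<in> Zp p \<Longrightarrow> A (\<lambda>i. l i + m i) = A l ** A m"
    using act by (simp add: action_def)
  have G: "\<And>l. l \<in> G_sub p i \<Longrightarrow> A l *v w = w" using wG by (simp add: Fix_def)
  have pow: "A (Ev (int k) i) *v w = w" for k
  proof (induction k)
    case 0
    have "Ev (int 0) i \<in> G_sub p i" by (simp add: G_sub_def Ev_def Zp_def)
    then show ?case using G by blast
  next
    case (Suc k)
    have "Ev (int (Suc k)) i = (\<lambda>j. Ev (int k) i j + Ev 1 i j)"
      by (auto simp: Ev_def)
    then have "A (Ev (int (Suc k)) i) = A (Ev (int k) i) ** A (Ev 1 i)"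
      using hom Ev_Zp ip by simp
    then show ?case using Suc wi by (simp add: matrix_vector_mul_assoc[symmetric])
  qed
  have "A l *v w = w" if l: "l \<in> Zp p" for l
  proof (cases "l i \<ge> 0")
    case True
    define l' where "l' = l(i := 0)"
    have l'G: "l' \<in> G_sub p i" using l by (auto simp: l'_def G_sub_def Zp_def)
    define n where "n = nat (l i)"
    have eq: "l = (\<lambda>j. l' j + Ev (int n) i j)"
      using True by (auto simp: l'_def Ev_def n_def)
    have l'Z: "l' \<in> Zp p" using l'G by (simp add: G_sub_def)
    have "A (\<lambda>j. l' j + Ev (int n) i j) = A l' ** A (Ev (int n) i)"
      by (rule hom[OF l'Z Ev_Zp[OF ip]])
    then have "A l = A l' ** A (Ev (int n) i)" using eq by simp
    then show ?thesis using pow G l'G by (simp add: matrix_vector_mul_assoc[symmetric])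
  next
    case False
    define l'' where "l'' = (\<lambda>j. l j + Ev (int (nat (- l i))) i j)"
    have "l'' \<in> G_sub p i" using l False ip by (auto simp: l''_def G_sub_def Zp_def Ev_def)
    moreover have "A l'' = A l ** A (Ev (int (nat (- l i))) i)"
      unfolding l''_def using hom Ev_Zp ip l by blast
    ultimately show ?thesis using pow G by (metis matrix_vector_mul_assoc)
  qed
  then show ?thesis by (simp add: Fix_def)
qed

definition idx :: "3 \<Rightarrow> nat" where
  "idx c = (if c = 1 then 0 else if c = 2 then 1 else 2)"

lemma idx_lt: "idx c < 3" by (simp add: idx_def)

lemma idx_inj: "c \<noteq> d \<Longrightarrow> idx c \<noteq> idx d"
  using exhaust_3[of c] exhaust_3[of d] by (auto simp: idx_def)

theorem lemma2p7:
  fixes p :: nat and A :: "(nat \<Rightarrow> int) \<Rightarrow> int^3^3"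
  assumes "p \<ge> 3"
    and "spectrally_unitary p A"
    and "Fix (Zp p) A = {0}"
  shows "\<exists>i<p. Fix (G_sub p i) A = {0}"
proof (rule ccontr)
  assume neg: "\<not> ?thesis"
  have act: "action p A" and ev1: "\<And>l. l \<in> Zp p \<Longrightarrow> eigenvalue_one (A l)"
    using assms(2) by (auto simp: spectrally_unitary_def)
  have hom: "\<And>l m. l \<in> Zp p \<Longrightarrow> m \<in> Zp p \<Longrightarrow> A (\<lambda>i. l i + m i) = A l ** A m"
    using act by (simp add: action_def)
  have "\<exists>u. u \<noteq> 0 \<and> u \<in> Fix (G_sub p i) A" if "i < p" for i
  proof -
    have "0 \<in> Fix (G_sub p i) A" by (simp add: Fix_def)
    then show ?thesis using neg that by blast
  qed
  then obtain u where u: "\<And>i. i < p \<Longrightarrow> u i \<noteq> 0 \<and> u i \<in> Fix (G_sub p i) A" by metis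
  have comm: "A (Ev 1 i) ** A (Ev 1 j) = A (Ev 1 j) ** A (Ev 1 i)" if "i < p" "j < p" for i j
  proof -
    have "(\<lambda>k. Ev 1 i k + Ev 1 j k) = (\<lambda>k. Ev 1 j k + Ev 1 i k)" by (simp add: add.commute)
    then show ?thesis using hom[of "Ev 1 i" "Ev 1 j"] hom[of "Ev 1 j" "Ev 1 i"] Ev_Zp that by metis
  qed
  have nfix: "A (Ev 1 i) *v u i \<noteq> u i" if "i < p" for i
    using fixall[OF act that, of "u i"] u[OF that] assms(3) by blast
  have ofix: "A (Ev 1 j) *v u i = u i" if "i < p" "j < p" "i \<noteq> j" for i j
  proof -
    have "Ev 1 j \<in> G_sub p i" using that by (auto simp: G_sub_def Ev_def Zp_def)
    then show ?thesis using u[OF that(1)] by (simp add: Fix_def)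
  qed
  define M where "M c = Cm (A (Ev 1 (idx c)))" for c
  define w where "w c = cv (u (idx c))" for c
  have ip: "idx c < p" for c using idx_lt[of c] assms(1) by linarith
  define l where "l = (\<lambda>k. (\<lambda>k. Ev 1 0 k + Ev 1 1 k) k + Ev 1 2 k)"
  have "(\<lambda>k. Ev 1 0 k + Ev 1 1 k) \<in> Zp p" using assms(1) by (auto simp: Zp_def Ev_def)
  then have "A l = A (\<lambda>k. Ev 1 0 k + Ev 1 1 k) ** A (Ev 1 2)"
    unfolding l_def using hom[OF _ Ev_Zp[of 2 p]] assms(1) by simp
  moreover have "A (\<lambda>k. Ev 1 0 k + Ev 1 1 k) = A (Ev 1 0) ** A (Ev 1 1)"
    using hom[OF Ev_Zp[of 0 p] Ev_Zp[of 1 p]] assms(1) by simp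
  ultimately have Al: "A l = A (Ev 1 0) ** A (Ev 1 1) ** A (Ev 1 2)" by simp
  have "l \<in> Zp p" using assms(1) by (auto simp: Zp_def Ev_def l_def)
  then obtain v :: "complex^3" where v: "v \<noteq> 0" "Cm (A l) *v v = v"
    using ev1 by (auto simp: eigenvalue_one_def Cm_def)
  have "M 1 ** M 2 ** M 3 = Cm (A l)"
    by (simp add: M_def Al Cm_mult idx_def)
  have "v = 0"
  proof (rule key[of M w])
    show "M i ** M j = M j ** M i" for i j
      by (simp add: M_def Cm_mult[symmetric] comm ip)
    show "M j *v w i = w i" if "i \<noteq> j" for i j
      using ofix[OF ip ip idx_inj[OF that]] by (simp add: M_def w_def Cm_mv)
    show "M i *v w i \<noteq> w i" for i
      using nfix[OF ip] by (simp add: M_def w_def Cm_mv cv_inj)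
    show "(M 1 ** M 2 ** M 3) *v v = v"
      using v \<open>M 1 ** M 2 ** M 3 = Cm (A l)\<close> by simp
  qed
  then show False using v by simp
qed

end
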